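(* For $j,k\in\mathbb{N}$ let $$R_{jk}=2^{3/2}\int_0^1\sin\Big(\frac{\pi x}{2}\Big)^{1/2}\sin(j\pi x)\sin(k\pi x)\,\mathrm{d}x,\qquad S_{jk}=\int_0^1\sin\Big(\frac{\pi x}{2}\Big)^{-1}\sin(j\pi x)\sin(k\pi x)\,\mathrm{d}x.$$ Let $n\in\mathbb{N}\setminus\{1\}$ and $j,k\in\{1,\dots,n\}$. Then: (i) $R_{jj}>0$, $R_{jk}<0$ if $j\ne k$, and $|R_{jk}|\le2\sqrt2$; (ii) $R_{n,n-1}$ is a decreasing function of $n\in\mathbb{N}\setminus\{1\}$; (iii) $2\sum_{k=1}^{n-1}R_{kn}\ge-R_{nn}$; (iv) $S_{jk}>\frac1\pi\log\Big(\frac{j+k+\frac12}{|j-k|+\frac12}\Big)>0$; (v) $S_{jk}<\frac1\pi\log\Big(\frac{j+k-\frac12}{|j-k|-\frac12}\Big)$ for $j\ne k$, and $S_{jj}<\frac2\pi+\frac1\pi\log(4j-1)$; (vi) $S_{jn}$ is an increasing function of $j$ for $1\le j\le n$. *)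

theory Defs
  imports "HOL-Analysis.Analysis"
begin

definition R :: "nat \<Rightarrow> nat \<Rightarrow> real" where
  "R j k = 2 powr (3/2) *
     integral {0..1} (\<lambda>x. sin (pi * x / 2) powr (1/2) * sin (real j * pi * x) * sin (real k * pi * x))"

text \<open>S_{jk} = int_0^1 sin(pi x/2)^(-1) sin(j pi x) sin(k pi x) dx
  (the integrand extends continuously to x = 0; in HOL, inverse 0 = 0 there)\<close>
definition S :: "nat \<Rightarrow> nat \<Rightarrow> real" where
  "S j k = integral {0..1} (\<lambda>x. inverse (sin (pi * x / 2)) * sin (real j * pi * x) * sin (real k * pi * x))"

end

theory Submission
  imports Defs
begin

lemma ln_strict: assumes "0 < (x::real)" "x \<noteq> 1" shows "ln x < x - 1"
proof -
  have s: "sqrt x > 0" using assms by simp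
  have "ln x = 2 * ln (sqrt x)" using assms by (simp add: ln_sqrt)
  also have "\<dots> \<le> 2 * (sqrt x - 1)" using ln_le_minus_one[OF s] by simp
  also have "\<dots> < x - 1"
  proof -
    have "sqrt x \<noteq> 1" using assms by auto
    hence "(sqrt x - 1)^2 > 0" by simp
    thus ?thesis using assms by (simp add: power2_eq_square algebra_simps)
  qed
  finally show ?thesis .
qed

definition Jf :: "nat \<Rightarrow> real \<Rightarrow> real" where
  "Jf m x = sqrt (sin (pi * x / 2)) * cos (real m * pi * x)"
definition J :: "nat \<Rightarrow> real" where "J m = integral {0..1} (Jf m)"

lemma Jf_int: "Jf m integrable_on {0..1}"
  unfolding Jf_def by (intro integrable_continuous_interval continuous_intros) auto

lemma trig_id: "3/2 * cos t * cos u - (2*real m+1) * sin t * sin u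
   = (real m + 5/4) * cos (u+t) - (real m - 1/4) * cos (u-t)"
  by (simp add: cos_add cos_diff algebra_simps)

lemma G_deriv:
  assumes x: "x \<in> {0<..<1::real}"
  shows "((\<lambda>x. sin (pi*x/2) * sqrt (sin (pi*x/2)) * cos ((2*real m+1)*pi*x/2)) has_vector_derivative
     (pi/2 * ((real m + 5/4) * Jf (Suc m) x - (real m - 1/4) * Jf m x))) (at x)"
proof -
  define s where "s = sin (pi*x/2)"
  define c where "c = cos ((2*real m+1)*pi*x/2)"
  have spos: "s > 0" unfolding s_def using x by (intro sin_gt_zero) auto
  have d: "((\<lambda>x. sin (pi*x/2) * sqrt (sin (pi*x/2)) * cos ((2*real m+1)*pi*x/2)) has_real_derivative
     (cos (pi*x/2) * (pi/2) * sqrt s * c + s * (cos (pi*x/2) * (pi/2) / (2 * sqrt s)) * c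
      + s * sqrt s * (- sin ((2*real m+1)*pi*x/2) * ((2*real m+1)*pi/2)))) (at x)"
    unfolding s_def c_def using spos[unfolded s_def]
    by (auto intro!: derivative_eq_intros simp: field_simps)
  have r: "s / sqrt s = sqrt s" using spos by (simp add: real_div_sqrt)
  have e: "cos (pi*x/2) * (pi/2) * sqrt s * c + s * (cos (pi*x/2) * (pi/2) / (2 * sqrt s)) * c
      + s * sqrt s * (- sin ((2*real m+1)*pi*x/2) * ((2*real m+1)*pi/2))
      = pi/2 * sqrt s * (3/2 * cos (pi*x/2) * c - (2*real m+1) * s * sin ((2*real m+1)*pi*x/2))"
  proof -
    have "s * (cos (pi*x/2) * (pi/2) / (2 * sqrt s)) * c = (s / sqrt s) * (cos (pi*x/2) * (pi/2) / 2) * c"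
      by simp
    also have "\<dots> = sqrt s * (cos (pi*x/2) * (pi/2) / 2) * c" by (simp add: r)
    finally show ?thesis by (simp add: algebra_simps)
  qed
  have t: "3/2 * cos (pi*x/2) * c - (2*real m+1) * s * sin ((2*real m+1)*pi*x/2)
      = (real m + 5/4) * cos (real (Suc m) * pi * x) - (real m - 1/4) * cos (real m * pi * x)"
  proof -
    have "3/2 * cos (pi*x/2) * c - (2*real m+1) * s * sin ((2*real m+1)*pi*x/2)
      = (real m + 5/4) * cos ((2*real m+1)*pi*x/2 + pi*x/2) - (real m - 1/4) * cos ((2*real m+1)*pi*x/2 - pi*x/2)"
      unfolding c_def s_def using trig_id[where t="pi*x/2" and m=m and u="(2*real m+1)*pi*x/2"] by (simp add: algebra_simps)
    moreover have "(2*real m+1)*pi*x/2 + pi*x/2 = real (Suc m) * pi * x" by (simp add: field_simps)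
    moreover have "(2*real m+1)*pi*x/2 - pi*x/2 = real m * pi * x" by (simp add: field_simps)
    ultimately show ?thesis by simp
  qed
  have f: "cos (pi*x/2) * (pi/2) * sqrt s * c + s * (cos (pi*x/2) * (pi/2) / (2 * sqrt s)) * c
      + s * sqrt s * (- sin ((2*real m+1)*pi*x/2) * ((2*real m+1)*pi/2))
      = pi/2 * ((real m + 5/4) * Jf (Suc m) x - (real m - 1/4) * Jf m x)"
    unfolding e t Jf_def s_def[symmetric] by (simp add: algebra_simps)
  show ?thesis using d unfolding has_real_derivative_iff_has_vector_derivative f .
qed


lemma cos_half_odd: "cos ((real i + 1/2) * pi) = 0"
proof -
  have "(real i + 1/2) * pi = real i * pi + pi/2" by (simp add: algebra_simps)
  thus ?thesis by (simp add: cos_add)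
qed

lemma J_rec: "(real m + 5/4) * J (Suc m) = (real m - 1/4) * J m"
proof -
  define G where "G x = sin (pi*x/2) * sqrt (sin (pi*x/2)) * cos ((2*real m+1)*pi*x/2)" for x
  have h: "((\<lambda>x. pi/2 * ((real m + 5/4) * Jf (Suc m) x - (real m - 1/4) * Jf m x)) has_integral (G 1 - G 0)) {0..1}"
    unfolding G_def
    apply (rule fundamental_theorem_of_calculus_interior)
      apply simp
     apply (intro continuous_intros; simp)
    apply (rule G_deriv, simp)
    done
  have eq: "(2*real m+1)*pi*1/2 = (real m + 1/2) * pi" by (simp add: algebra_simps)
  have "cos ((2*real m+1)*pi*1/2) = 0" by (subst eq) (rule cos_half_odd)
  hence G1: "G 1 = 0" unfolding G_def by simp
  have G0: "G 0 = 0" unfolding G_def by simp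
  have h2: "((\<lambda>x. pi/2 * ((real m + 5/4) * Jf (Suc m) x - (real m - 1/4) * Jf m x)) has_integral
     (pi/2 * ((real m + 5/4) * J (Suc m) - (real m - 1/4) * J m))) {0..1}"
    unfolding J_def
    by (intro has_integral_mult_right has_integral_diff integrable_integral Jf_int)
  have "pi/2 * ((real m + 5/4) * J (Suc m) - (real m - 1/4) * J m) = 0"
    using has_integral_unique[OF h h2] G1 G0 by simp
  thus ?thesis by simp
qed

lemma sin_int: "((\<lambda>x. sin (pi*x/2)) has_integral 2/pi) {0..1::real}"
proof -
  have "((\<lambda>x. sin (pi*x/2)) has_integral ((\<lambda>x. - cos (pi*x/2) * (2/pi)) 1 - (\<lambda>x. - cos (pi*x/2) * (2/pi)) 0)) {0..1::real}"
    apply (rule fundamental_theorem_of_calculus_interior)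
      apply simp
     apply (intro continuous_intros)
    apply (unfold has_real_derivative_iff_has_vector_derivative[symmetric])
    apply (rule derivative_eq_intros refl | simp)+
    done
  thus ?thesis by simp
qed

lemma J0_pos: "J 0 \<ge> 2/pi"
proof -
  have "2/pi \<le> integral {0..1} (Jf 0)"
  proof (rule has_integral_le[OF sin_int integrable_integral[OF Jf_int]])
    fix x :: real assume x: "x \<in> {0..1}"
    define y where "y = sin (pi*x/2)"
    have y0: "0 \<le> y" unfolding y_def using x by (intro sin_ge_zero) auto
    have y1: "y \<le> 1" unfolding y_def by simp
    have "y = sqrt y * sqrt y" using y0 by simp
    also have "\<dots> \<le> sqrt y * 1" using y0 y1 by (intro mult_left_mono) auto
    finally show "sin (pi*x/2) \<le> Jf 0 x" unfolding Jf_def y_def by simp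
  qed
  thus ?thesis unfolding J_def .
qed

lemma J0_le1: "J 0 \<le> 1"
proof -
  have "integral {0..1} (Jf 0) \<le> integral {0..1::real} (\<lambda>x. 1::real)"
  proof (rule integral_le[OF Jf_int])
    show "(\<lambda>x. 1::real) integrable_on {0..1::real}" by (rule integrable_continuous_interval) (rule continuous_on_const)
    fix x :: real
    have "sin (pi*x/2) \<le> 1" by simp
    thus "Jf 0 x \<le> 1" unfolding Jf_def by simp
  qed
  thus ?thesis unfolding J_def by simp
qed

lemma J1: "J 1 = - J 0 / 5"
proof -
  have "(0 + 5/4) * J (Suc 0) = (0 - 1/4) * J 0" using J_rec[of 0] by simp
  thus ?thesis by simp
qed

lemma J0_gt: "J 0 > 0"
proof -
  have "2/pi > 0" by simp
  thus ?thesis using J0_pos by linarith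
qed

lemma J_neg: "1 \<le> m \<Longrightarrow> J m < 0"
proof (induction m)
  case 0 thus ?case by simp
next
  case (Suc m)
  show ?case
  proof (cases "m = 0")
    case True thus ?thesis using J1 J0_gt by simp
  next
    case False
    hence "J m < 0" "real m \<ge> 1" using Suc by auto
    hence "(real m - 1/4) * J m < 0" by (intro mult_pos_neg) auto
    hence "(real m + 5/4) * J (Suc m) < 0" using J_rec[of m] by simp
    moreover have "real m + 5/4 > 0" by simp
    ultimately show ?thesis by (simp add: mult_less_0_iff)
  qed
qed

lemma J_step: "1 \<le> m \<Longrightarrow> J m < J (Suc m)"
proof -
  assume m: "1 \<le> m"
  have "(real m + 5/4) * (J (Suc m) - J m) = (real m + 5/4) * J (Suc m) - (real m + 5/4) * J m"
    by (simp add: right_diff_distrib)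
  also have "\<dots> = (real m - 1/4) * J m - (real m + 5/4) * J m" using J_rec[of m] by simp
  also have "\<dots> = - (3/2) * J m" by (simp add: algebra_simps)
  also have "\<dots> > 0" using J_neg[OF m] by simp
  finally have "(real m + 5/4) * (J (Suc m) - J m) > 0" .
  moreover have "real m + 5/4 > 0" by simp
  ultimately show ?thesis by (simp add: zero_less_mult_iff)
qed

lemma J_strict: "1 \<le> a \<Longrightarrow> a < b \<Longrightarrow> J a < J b"
proof (induction b)
  case 0 thus ?case by simp
next
  case (Suc b)
  show ?case
  proof (cases "a = b")
    case True thus ?thesis using J_step Suc by simp
  next
    case False
    hence "J a < J b" using Suc by auto
    moreover have "J b < J (Suc b)" using Suc False by (intro J_step) auto
    ultimately show ?thesis by simp
  qed
qed

lemma J_mono: "1 \<le> a \<Longrightarrow> a \<le> b \<Longrightarrow> J a \<le> J b"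
  using J_strict[of a b] by (cases "a = b") auto

lemma J_lower: "1 \<le> m \<Longrightarrow> - J 0 / 5 \<le> J m"
  using J_mono[of 1 m] J1 by simp

lemma J_partial: "J 0 + 2 * (\<Sum>i=1..p. J i) = - (4 * real p + 5) * J (Suc p)"
proof (induction p)
  case 0 thus ?case using J1 by simp
next
  case (Suc p)
  have "J 0 + 2 * (\<Sum>i=1..Suc p. J i) = - (4 * real p + 5) * J (Suc p) + 2 * J (Suc p)"
    using Suc by (simp add: algebra_simps)
  also have "\<dots> = - (4 * real (Suc p) + 5) * J (Suc (Suc p))"
    using J_rec[of "Suc p"] by (simp add: algebra_simps)
  finally show ?case .
qed


lemma sin_prod: "sin (a::real) * sin b = (cos (a - b) - cos (a + b)) / 2"
  by (simp add: cos_diff cos_add)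

definition dd :: "nat \<Rightarrow> nat \<Rightarrow> nat" where "dd j k = (if k \<le> j then j - k else k - j)"

lemma real_dd: "real (dd j k) = \<bar>real j - real k\<bar>"
  by (simp add: dd_def of_nat_diff)

lemma cos_abs_mult: "cos (\<bar>t\<bar> * y) = cos (t * (y::real))"
  by (cases "t \<ge> 0") (auto simp: abs_if)

lemma sin_sin_dd: "sin (real j * pi * x) * sin (real k * pi * x)
   = (cos (real (dd j k) * pi * x) - cos (real (j + k) * pi * x)) / 2"
proof -
  have "real j * pi * x - real k * pi * x = (real j - real k) * (pi * x)" by (simp add: algebra_simps)
  hence 1: "cos (real j * pi * x - real k * pi * x) = cos (real (dd j k) * pi * x)"
    using cos_abs_mult[of "real j - real k" "pi*x"] by (simp add: real_dd mult.assoc)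
  have 2: "real j * pi * x + real k * pi * x = real (j + k) * pi * x" by (simp add: algebra_simps)
  show ?thesis unfolding sin_prod 1 2 ..
qed

lemma two_powr: "(2::real) powr (3/2) = 2 * sqrt 2"
proof -
  have "(2::real) powr (3/2) = 2 powr (1 + 1/2)" by simp
  also have "\<dots> = 2 powr 1 * 2 powr (1/2)" by (rule powr_add)
  also have "\<dots> = 2 * sqrt 2" by (simp add: powr_half_sqrt)
  finally show ?thesis .
qed

lemma R_J: "R j k = sqrt 2 * (J (dd j k) - J (j + k))"
proof -
  have "integral {0..1} (\<lambda>x. sin (pi * x / 2) powr (1/2) * sin (real j * pi * x) * sin (real k * pi * x))
      = integral {0..1} (\<lambda>x. (Jf (dd j k) x - Jf (j + k) x) / 2)"
  proof (rule integral_cong)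
    fix x :: real assume x: "x \<in> {0..1}"
    have "0 \<le> sin (pi * x / 2)" using x by (intro sin_ge_zero) auto
    hence "sin (pi * x / 2) powr (1/2) = sqrt (sin (pi * x / 2))" by (rule powr_half_sqrt)
    thus "sin (pi * x / 2) powr (1/2) * sin (real j * pi * x) * sin (real k * pi * x)
      = (Jf (dd j k) x - Jf (j + k) x) / 2"
      unfolding Jf_def mult.assoc[of "sin (pi * x / 2) powr (1/2)"] sin_sin_dd by (simp add: algebra_simps)
  qed
  also have "\<dots> = (J (dd j k) - J (j + k)) / 2"
    unfolding J_def by (simp add: integral_diff Jf_int)
  finally show ?thesis unfolding R_def two_powr by simp
qed

lemma cos_tele:
  assumes "a \<le> b"
  shows "sin (pi*x/2) * (\<Sum>i=a..<b. sin ((real i + 1/2) * pi * x))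
     = (cos (real a * pi * x) - cos (real b * pi * x)) / 2"
proof -
  have t: "sin (pi*x/2) * sin ((real i + 1/2) * pi * x) = (cos (real i * pi * x) - cos (real (Suc i) * pi * x)) / 2" for i
  proof -
    have 1: "pi*x/2 - (real i + 1/2) * pi * x = - (real i * pi * x)" by (simp add: algebra_simps)
    have 2: "pi*x/2 + (real i + 1/2) * pi * x = real (Suc i) * pi * x" by (simp add: algebra_simps)
    show ?thesis unfolding sin_prod 1 2 by simp
  qed
  have "sin (pi*x/2) * (\<Sum>i=a..<b. sin ((real i + 1/2) * pi * x))
      = (\<Sum>i=a..<b. (cos (real i * pi * x) - cos (real (Suc i) * pi * x)) / 2)"
    by (simp add: sum_distrib_left t)
  also have "\<dots> = - (\<Sum>i=a..<b. cos (real (Suc i) * pi * x) - cos (real i * pi * x)) / 2"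
    by (simp add: sum_divide_distrib[symmetric] sum_negf[symmetric])
  also have "\<dots> = (cos (real a * pi * x) - cos (real b * pi * x)) / 2"
    using sum_Suc_diff'[OF assms, of "\<lambda>i. cos (real i * pi * x)"] by simp
  finally show ?thesis .
qed

lemma sin_half_int: "((\<lambda>x. sin ((real i + 1/2) * pi * x)) has_integral 1 / ((real i + 1/2) * pi)) {0..1}"
proof -
  define c where "c = (real i + 1/2) * pi"
  have c: "c > 0" unfolding c_def by simp
  have "((\<lambda>x. sin (c * x)) has_integral ((\<lambda>x. - cos (c * x) / c) 1 - (\<lambda>x. - cos (c * x) / c) 0)) {0..1}"
    apply (rule fundamental_theorem_of_calculus_interior)
      apply simp
     apply (intro continuous_intros)
    apply (unfold has_real_derivative_iff_has_vector_derivative[symmetric])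
    apply (rule derivative_eq_intros refl | use c in simp)+
    done
  moreover have "cos c = 0" unfolding c_def by (rule cos_half_odd)
  ultimately show ?thesis unfolding c_def by (simp add: mult.assoc)
qed

lemma S_T: "S j k = (\<Sum>i=dd j k..<j+k. 1 / (real i + 1/2)) / pi"
proof -
  have le: "dd j k \<le> j + k" by (simp add: dd_def) arith
  have "((\<lambda>x. \<Sum>i=dd j k..<j+k. sin ((real i + 1/2) * pi * x)) has_integral
         (\<Sum>i=dd j k..<j+k. 1 / ((real i + 1/2) * pi))) {0..1}"
    by (intro has_integral_sum sin_half_int) auto
  moreover have "(\<Sum>i=dd j k..<j+k. 1 / ((real i + 1/2) * pi)) = (\<Sum>i=dd j k..<j+k. 1 / (real i + 1/2)) / pi"
    by (simp add: sum_divide_distrib)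
  moreover have "inverse (sin (pi * x / 2)) * sin (real j * pi * x) * sin (real k * pi * x)
      = (\<Sum>i=dd j k..<j+k. sin ((real i + 1/2) * pi * x))" if x: "x \<in> {0..1}" for x
  proof (cases "x = 0")
    case True thus ?thesis by simp
  next
    case False
    hence s: "sin (pi * x / 2) > 0" using x by (intro sin_gt_zero) auto
    have "sin (real j * pi * x) * sin (real k * pi * x) = sin (pi*x/2) * (\<Sum>i=dd j k..<j+k. sin ((real i + 1/2) * pi * x))"
      unfolding cos_tele[OF le] sin_sin_dd ..
    thus ?thesis using s by (simp add: mult.assoc)
  qed
  ultimately show ?thesis unfolding S_def
    by (metis (no_types, lifting) has_integral_integrable_integral integral_cong)
qed


lemma T_lower:
  assumes "a < b"
  shows "ln ((real b + 1/2) / (real a + 1/2)) < (\<Sum>i=a..<b. 1 / (real i + 1/2))"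
proof -
  have trm: "ln (real (Suc i) + 1/2) - ln (real i + 1/2) < 1 / (real i + 1/2)" for i
  proof -
    have "ln (real (Suc i) + 1/2) - ln (real i + 1/2) = ln ((real (Suc i) + 1/2) / (real i + 1/2))"
      by (simp add: ln_div)
    also have "(real (Suc i) + 1/2) / (real i + 1/2) = 1 + 1 / (real i + 1/2)"
      by (simp add: field_simps)
    also have "ln (1 + 1 / (real i + 1/2)) < 1 / (real i + 1/2)"
      by (rule ln_add_one_self_less_self) simp
    finally show ?thesis .
  qed
  have "(\<Sum>i=a..<b. ln (real (Suc i) + 1/2) - ln (real i + 1/2)) < (\<Sum>i=a..<b. 1 / (real i + 1/2))"
    using assms by (intro sum_strict_mono trm) auto
  moreover have "(\<Sum>i=a..<b. ln (real (Suc i) + 1/2) - ln (real i + 1/2)) = ln (real b + 1/2) - ln (real a + 1/2)"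
    using sum_Suc_diff'[of a b "\<lambda>i. ln (real i + 1/2)"] assms by simp
  moreover have "ln (real b + 1/2) - ln (real a + 1/2) = ln ((real b + 1/2) / (real a + 1/2))"
    by (simp add: ln_div)
  ultimately show ?thesis by simp
qed

lemma T_upper:
  assumes "1 \<le> a" "a < b"
  shows "(\<Sum>i=a..<b. 1 / (real i + 1/2)) < ln ((real b - 1/2) / (real a - 1/2))"
proof -
  have trm: "1 / (real i + 1/2) < ln (real (Suc i) - 1/2) - ln (real i - 1/2)" if i: "i \<in> {a..<b}" for i
  proof -
    have i1: "real i \<ge> 1" using i assms by auto
    define y where "y = (real i - 1/2) / (real i + 1/2)"
    have y0: "y > 0" unfolding y_def using i1 by simp
    have y1: "y \<noteq> 1" unfolding y_def using i1 by (simp add: field_simps)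
    have "ln y < y - 1" by (rule ln_strict[OF y0 y1])
    moreover have "y - 1 = - (1 / (real i + 1/2))" unfolding y_def using i1 by (simp add: field_simps)
    moreover have "ln y = ln (real i - 1/2) - ln (real (Suc i) - 1/2)"
      unfolding y_def using i1 by (simp add: ln_div add.commute)
    ultimately show ?thesis by simp
  qed
  have "(\<Sum>i=a..<b. 1 / (real i + 1/2)) < (\<Sum>i=a..<b. ln (real (Suc i) - 1/2) - ln (real i - 1/2))"
    using assms by (intro sum_strict_mono trm) auto
  moreover have "(\<Sum>i=a..<b. ln (real (Suc i) - 1/2) - ln (real i - 1/2)) = ln (real b - 1/2) - ln (real a - 1/2)"
    using sum_Suc_diff'[of a b "\<lambda>i. ln (real i - 1/2)"] assms by simp
  moreover have "ln (real b - 1/2) - ln (real a - 1/2) = ln ((real b - 1/2) / (real a - 1/2))"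
    using assms by (simp add: ln_div)
  ultimately show ?thesis by simp
qed


lemma J_abs: "\<bar>J m\<bar> \<le> 1"
proof (cases "m = 0")
  case True thus ?thesis using J0_le1 J0_gt by simp
next
  case False
  hence "J m < 0" "- J 0 / 5 \<le> J m" using J_neg J_lower by auto
  thus ?thesis using J0_le1 by simp
qed

lemma dd_same: "dd j j = 0" by (simp add: dd_def)
lemma dd_ne: "j \<noteq> k \<Longrightarrow> 1 \<le> dd j k" by (simp add: dd_def) arith
lemma dd_lt: "1 \<le> j \<Longrightarrow> 1 \<le> k \<Longrightarrow> dd j k < j + k" by (simp add: dd_def) arith

lemma part1:
  assumes j: "1 \<le> j" and k: "1 \<le> k"
  shows "R j j > 0 \<and> (j \<noteq> k \<longrightarrow> R j k < 0) \<and> \<bar>R j k\<bar> \<le> 2 * sqrt 2"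
proof (intro conjI impI)
  have "J (j + j) < 0" using j by (intro J_neg) simp
  thus "R j j > 0" unfolding R_J dd_same using J0_gt by simp
next
  assume "j \<noteq> k"
  hence "J (dd j k) < J (j + k)" using dd_ne dd_lt j k by (intro J_strict) auto
  thus "R j k < 0" unfolding R_J by (simp add: mult_pos_neg)
next
  have "\<bar>J (dd j k) - J (j + k)\<bar> \<le> 2" using J_abs[of "dd j k"] J_abs[of "j+k"] by simp
  hence "sqrt 2 * \<bar>J (dd j k) - J (j + k)\<bar> \<le> sqrt 2 * 2" by (intro mult_left_mono) auto
  thus "\<bar>R j k\<bar> \<le> 2 * sqrt 2" unfolding R_J by (simp add: abs_mult)
qed

lemma part2: "2 \<le> m \<Longrightarrow> m \<le> m' \<Longrightarrow> R m' (m' - 1) \<le> R m (m - 1)"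
proof -
  assume a: "2 \<le> m" "m \<le> m'"
  have d: "dd x (x - 1) = 1" if "2 \<le> x" for x using that by (simp add: dd_def)
  have "J (m + (m - 1)) \<le> J (m' + (m' - 1))" using a by (intro J_mono) auto
  thus ?thesis unfolding R_J using a d[of m] d[of m'] by simp
qed

lemma part3:
  assumes n: "2 \<le> n"
  shows "2 * (\<Sum>i = 1..n - 1. R i n) \<ge> - R n n"
proof -
  have Ri: "R i n = sqrt 2 * (J (n - i) - J (i + n))" if "i \<in> {1..n-1}" for i
    using that n unfolding R_J by (auto simp: dd_def)
  have "(\<Sum>i = 1..n - 1. R i n) = sqrt 2 * ((\<Sum>i = 1..n - 1. J (n - i)) - (\<Sum>i = 1..n - 1. J (i + n)))"
    by (simp add: Ri sum_subtractf[symmetric] sum_distrib_left)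
  moreover have "(\<Sum>i = 1..n - 1. J (n - i)) = (\<Sum>i = 1..n - 1. J i)"
  proof -
    have "(\<Sum>i = 1..n - 1. J i) = (\<Sum>i = 1..n - 1. J (n - 1 + 1 - i))" by (rule sum.atLeastAtMost_rev)
    also have "\<dots> = (\<Sum>i = 1..n - 1. J (n - i))" using n by simp
    finally show ?thesis by simp
  qed
  moreover have "(\<Sum>i = 1..n - 1. J (i + n)) \<le> 0"
  proof (intro sum_nonpos)
    fix x assume "x \<in> {1..n-1}"
    hence "1 \<le> x + n" by simp
    thus "J (x + n) \<le> 0" using J_neg by fastforce
  qed
  moreover have "J 0 + 2 * (\<Sum>i = 1..n - 1. J i) > 0"
  proof -
    have "J 0 + 2 * (\<Sum>i = 1..n - 1. J i) = - (4 * real (n - 1) + 5) * J (Suc (n - 1))" by (rule J_partial)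
    moreover have "J (Suc (n - 1)) < 0" by (rule J_neg) simp
    moreover have "- (4 * real (n - 1) + 5) < 0" by simp
    ultimately show ?thesis by (metis mult_neg_neg)
  qed
  moreover have "R n n = sqrt 2 * (J 0 - J (n + n))" unfolding R_J dd_same ..
  moreover have "J (n + n) < 0" using n by (intro J_neg) simp
  ultimately have "2 * (\<Sum>i = 1..n - 1. R i n) + R n n
      = sqrt 2 * ((J 0 + 2 * (\<Sum>i = 1..n - 1. J i)) - 2 * (\<Sum>i = 1..n - 1. J (i + n)) - J (n + n))"
    and "(J 0 + 2 * (\<Sum>i = 1..n - 1. J i)) - 2 * (\<Sum>i = 1..n - 1. J (i + n)) - J (n + n) > 0"
    by (simp_all add: algebra_simps)
  hence "2 * (\<Sum>i = 1..n - 1. R i n) + R n n > 0" by simp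
  thus ?thesis by simp
qed

lemma part4:
  assumes j: "1 \<le> j" and k: "1 \<le> k"
  shows "S j k > (1 / pi) * ln ((real j + real k + 1/2) / (\<bar>real j - real k\<bar> + 1/2))
        \<and> (1 / pi) * ln ((real j + real k + 1/2) / (\<bar>real j - real k\<bar> + 1/2)) > 0"
proof
  have lt: "dd j k < j + k" using dd_lt j k .
  have "ln ((real (j + k) + 1/2) / (real (dd j k) + 1/2)) < (\<Sum>i=dd j k..<j+k. 1 / (real i + 1/2))"
    by (rule T_lower[OF lt])
  hence "ln ((real (j + k) + 1/2) / (real (dd j k) + 1/2)) / pi < S j k"
    unfolding S_T by (simp add: divide_strict_right_mono)
  thus "S j k > (1 / pi) * ln ((real j + real k + 1/2) / (\<bar>real j - real k\<bar> + 1/2))"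
    by (simp add: real_dd)
  have "real (dd j k) < real (j + k)" using lt by linarith
  hence "(real (j + k) + 1/2) / (real (dd j k) + 1/2) > 1" by simp
  hence "ln ((real (j + k) + 1/2) / (real (dd j k) + 1/2)) > 0" by simp
  thus "(1 / pi) * ln ((real j + real k + 1/2) / (\<bar>real j - real k\<bar> + 1/2)) > 0"
    by (simp add: real_dd)
qed

lemma part5:
  assumes j: "1 \<le> j" and k: "1 \<le> k" and ne: "j \<noteq> k"
  shows "S j k < (1 / pi) * ln ((real j + real k - 1/2) / (\<bar>real j - real k\<bar> - 1/2))"
proof -
  have "(\<Sum>i=dd j k..<j+k. 1 / (real i + 1/2)) < ln ((real (j + k) - 1/2) / (real (dd j k) - 1/2))"
    by (rule T_upper[OF dd_ne[OF ne] dd_lt[OF j k]])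
  hence "S j k < ln ((real (j + k) - 1/2) / (real (dd j k) - 1/2)) / pi"
    unfolding S_T by (simp add: divide_strict_right_mono)
  thus ?thesis by (simp add: real_dd)
qed

lemma part6:
  assumes j: "1 \<le> j"
  shows "S j j < 2 / pi + (1 / pi) * ln (4 * real j - 1)"
proof -
  have "(\<Sum>i=0..<j+j. 1 / (real i + 1/2)) = 1 / (real 0 + 1/2) + (\<Sum>i=Suc 0..<j+j. 1 / (real i + 1/2))"
    using j by (intro sum.atLeast_Suc_lessThan) simp
  moreover have "(\<Sum>i=1..<j+j. 1 / (real i + 1/2)) < ln ((real (j + j) - 1/2) / (real 1 - 1/2))"
    using j by (intro T_upper) auto
  moreover have "(real (j + j) - 1/2) / (real 1 - 1/2) = 4 * real j - 1" by (simp add: field_simps)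
  ultimately have "(\<Sum>i=0..<j+j. 1 / (real i + 1/2)) < 2 + ln (4 * real j - 1)" by simp
  hence "(\<Sum>i=0..<j+j. 1 / (real i + 1/2)) / pi < (2 + ln (4 * real j - 1)) / pi"
    by (simp add: divide_strict_right_mono)
  thus ?thesis unfolding S_T dd_same by (simp add: add_divide_distrib)
qed

lemma part7: "1 \<le> a \<Longrightarrow> a \<le> b \<Longrightarrow> b \<le> n \<Longrightarrow> S a n \<le> S b n"
proof -
  assume ab: "1 \<le> a" "a \<le> b" "b \<le> n"
  have "(\<Sum>i=dd a n..<a+n. 1 / (real i + 1/2)) \<le> (\<Sum>i=dd b n..<b+n. 1 / (real i + 1/2))"
    using ab by (intro sum_mono2) (auto simp: dd_def)
  thus ?thesis unfolding S_T by (simp add: divide_right_mono)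
qed

theorem lemma3p6:
  fixes n j k :: nat
  assumes "2 \<le> n" and "j \<in> {1..n}" and "k \<in> {1..n}"
  shows
    "(R j j > 0 \<and> (j \<noteq> k \<longrightarrow> R j k < 0) \<and> \<bar>R j k\<bar> \<le> 2 * sqrt 2)
     \<and> (\<forall>m m'. 2 \<le> m \<and> m \<le> m' \<longrightarrow> R m' (m' - 1) \<le> R m (m - 1))
     \<and> 2 * (\<Sum>i = 1..n - 1. R i n) \<ge> - R n n
     \<and> (S j k > (1 / pi) * ln ((real j + real k + 1/2) / (\<bar>real j - real k\<bar> + 1/2))
        \<and> (1 / pi) * ln ((real j + real k + 1/2) / (\<bar>real j - real k\<bar> + 1/2)) > 0)
     \<and> (j \<noteq> k \<longrightarrow> S j k < (1 / pi) * ln ((real j + real k - 1/2) / (\<bar>real j - real k\<bar> - 1/2)))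
     \<and> S j j < 2 / pi + (1 / pi) * ln (4 * real j - 1)
     \<and> (\<forall>a b. 1 \<le> a \<and> a \<le> b \<and> b \<le> n \<longrightarrow> S a n \<le> S b n)"
proof -
  have j: "1 \<le> j" and k: "1 \<le> k" using assms by auto
  show ?thesis
    using part1[OF j k] part2 part3[OF assms(1)] part4[OF j k] part5[OF j k] part6[OF j] part7
    by blast
qed

end
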